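(* Let $f_1,\dots,f_n$ be monotone linear functions and let $\sigma$ be a counterclockwise permutation for them with $f^\sigma(x)=x$ for all $x$. Then $f^\tau(x)=x$ for all $x$ and every counterclockwise permutation $\tau$ for $f_1,\dots,f_n$.
   Context: A linear function is $f(x)=ax+b$; monotone means $a>0$; identical means $f(x)=x$. $\vec f=(b,1-a)^\top$ and $\theta(f)\in[0,2\pi)$ is its polar angle ($\bot$ if $\vec f=0$). For a permutation $\sigma$ of $[n]$, $f^\sigma=f_{\sigma(n)}\circ\cdots\circ f_{\sigma(1)}$. $\sigma$ is counterclockwise if, after discarding positions $i$ with $f_{\sigma(i)}$ identical, there is $k$ such that $\theta(f_{\sigma(k)})\le\cdots\le\theta(f_{\sigma(n)})\le\theta(f_{\sigma(1)})\le\cdots\le\theta(f_{\sigma(k-1)})$. *)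

theory Defs
  imports "HOL-Analysis.Analysis" "HOL-Combinatorics.Permutations"
begin

(* A linear function f(x) = a x + b is represented by the pair (a, b). *)
type_synonym linfun = "real \<times> real"

definition lin_app :: "linfun \<Rightarrow> real \<Rightarrow> real" where
  "lin_app f x = fst f * x + snd f"

definition monotone_lin :: "linfun \<Rightarrow> bool" where
  "monotone_lin f \<longleftrightarrow> fst f > 0"

definition identical_lin :: "linfun \<Rightarrow> bool" where
  "identical_lin f \<longleftrightarrow> (\<forall>x. lin_app f x = x)"

definition fvec :: "linfun \<Rightarrow> complex" where
  "fvec f = Complex (snd f) (1 - fst f)"

(* polar angle in [0, 2 pi) of the vector; only used when fvec f \<noteq> 0 *)
definition theta :: "linfun \<Rightarrow> real" where
  "theta f = (if Arg (fvec f) \<ge> 0 then Arg (fvec f) else Arg (fvec f) + 2 * pi)"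

(* f^sigma restricted to the first k positions: f_{sigma k} o ... o f_{sigma 1} *)
fun comp_perm :: "(nat \<Rightarrow> linfun) \<Rightarrow> (nat \<Rightarrow> nat) \<Rightarrow> nat \<Rightarrow> real \<Rightarrow> real" where
  "comp_perm f \<sigma> 0 = id"
| "comp_perm f \<sigma> (Suc k) = lin_app (f (\<sigma> (Suc k))) \<circ> comp_perm f \<sigma> k"

definition angle_seq :: "(nat \<Rightarrow> linfun) \<Rightarrow> (nat \<Rightarrow> nat) \<Rightarrow> nat \<Rightarrow> real list" where
  "angle_seq f \<sigma> n =
     map (\<lambda>i. theta (f (\<sigma> i))) (filter (\<lambda>i. \<not> identical_lin (f (\<sigma> i))) [1..<Suc n])"

definition counterclockwise :: "(nat \<Rightarrow> linfun) \<Rightarrow> nat \<Rightarrow> (nat \<Rightarrow> nat) \<Rightarrow> bool" where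
  "counterclockwise f n \<sigma> \<longleftrightarrow>
     \<sigma> permutes {1..n} \<and> (\<exists>k. sorted (rotate k (angle_seq f \<sigma> n)))"

end

theory Submission
  imports Defs
begin

fun cl :: "linfun list \<Rightarrow> real \<Rightarrow> real" where
  "cl [] = id"
| "cl (g # gs) = cl gs \<circ> lin_app g"

lemma cl_append: "cl (xs @ ys) = cl ys \<circ> cl xs"
  by (induction xs) (auto simp: comp_assoc)

lemma comp_perm_cl: "comp_perm f \<sigma> n = cl (map (\<lambda>i. f (\<sigma> i)) [1..<Suc n])"
  by (induction n) (auto simp: cl_append)

lemma identical_id: "identical_lin g \<Longrightarrow> lin_app g = id"
  by (auto simp: identical_lin_def)

lemma cl_filter: "cl (filter (\<lambda>g. \<not> identical_lin g) xs) = cl xs"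
  by (induction xs) (auto simp: identical_id)

definition commutes :: "linfun \<Rightarrow> linfun \<Rightarrow> bool" where
  "commutes g h \<longleftrightarrow> lin_app g \<circ> lin_app h = lin_app h \<circ> lin_app g"

lemma nonid_fvec: "\<not> identical_lin g \<Longrightarrow> fvec g \<noteq> 0"
  by (cases g) (auto simp: identical_lin_def fvec_def lin_app_def complex_eq_iff)

lemma theta_Arg: "theta g = theta h \<Longrightarrow> Arg (fvec g) = Arg (fvec h)"
  using Arg_bounded[of "fvec g"] Arg_bounded[of "fvec h"]
  by (auto simp: theta_def split: if_splits)

lemma same_theta_commutes:
  assumes "\<not> identical_lin g" "\<not> identical_lin h" "theta g = theta h"
  shows "commutes g h"
proof -
  define z where "z = fvec g"
  define w where "w = fvec h"
  have z0: "z \<noteq> 0" and w0: "w \<noteq> 0" using nonid_fvec assms z_def w_def by auto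
  have "sgn z = sgn w"
    using Arg_correct[OF z0] Arg_correct[OF w0] theta_Arg[OF assms(3)] z_def w_def by simp
  hence "z / of_real (cmod z) = w / of_real (cmod w)" by (simp add: sgn_div_norm divide_inverse scaleR_conv_of_real mult.commute)
  hence "z = of_real (cmod z / cmod w) * w" using z0 w0
    by (simp add: field_simps)
  then obtain c where zc: "z = of_real c * w" by blast
  hence "Re z = c * Re w" "Im z = c * Im w" by auto
  hence cross: "Re z * Im w = Im z * Re w" by simp
  show ?thesis
    using cross unfolding commutes_def z_def w_def
    by (cases g, cases h) (auto simp: fvec_def lin_app_def fun_eq_iff algebra_simps)
qed

lemma cl_move:
  assumes "\<forall>y\<in>set ys. commutes x y"
  shows "cl (ys @ [x]) = cl (x # ys)"
  using assms
proof (induction ys)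
  case Nil then show ?case by simp
next
  case (Cons y ys)
  have "cl ((y # ys) @ [x]) = cl (ys @ [x]) \<circ> lin_app y" by simp
  also have "\<dots> = cl ys \<circ> (lin_app x \<circ> lin_app y)" using Cons by (simp add: fun_eq_iff)
  also have "\<dots> = cl ys \<circ> (lin_app y \<circ> lin_app x)" using Cons.prems by (simp add: commutes_def)
  finally show ?case by (simp add: comp_assoc)
qed

lemma cl_sorted_eq:
  "mset X = mset Y \<Longrightarrow> sorted (map theta X) \<Longrightarrow> sorted (map theta Y) \<Longrightarrow>
   (\<forall>g\<in>set X. \<forall>h\<in>set X. theta g = theta h \<longrightarrow> commutes g h) \<Longrightarrow> cl X = cl Y"
proof (induction X arbitrary: Y)
  case Nil then show ?case by simp
next
  case (Cons x X')
  have "x \<in> set Y" using Cons.prems(1) by (metis list.set_intros(1) set_mset_mset)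
  then obtain Y1 Y2 where Y: "Y = Y1 @ x # Y2" and nx: "x \<notin> set Y1"
    by (metis split_list_first)
  have setXY: "set (x # X') = set Y" using Cons.prems(1) by (metis set_mset_mset)
  have com: "\<forall>y\<in>set Y1. commutes x y"
  proof
    fix y assume y: "y \<in> set Y1"
    have "theta y \<le> theta x" using Cons.prems(3) y unfolding Y by (auto simp: sorted_append)
    moreover have "y \<in> set X'" using y nx setXY Y by auto
    hence "theta x \<le> theta y" using Cons.prems(2) by auto
    ultimately have "theta x = theta y" by simp
    moreover have "y \<in> set (x # X')" using \<open>y \<in> set X'\<close> by simp
    ultimately show "commutes x y" using Cons.prems(4) by auto
  qed
  have "cl Y = cl Y2 \<circ> cl (Y1 @ [x])" unfolding Y using cl_append[of "Y1 @ [x]" Y2] by simp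
  also have "\<dots> = cl (Y1 @ Y2) \<circ> lin_app x" using cl_move[OF com] by (simp add: cl_append comp_assoc)
  finally have cY: "cl Y = cl (Y1 @ Y2) \<circ> lin_app x" .
  have "cl X' = cl (Y1 @ Y2)"
  proof (rule Cons.IH)
    show "mset X' = mset (Y1 @ Y2)" using Cons.prems(1) unfolding Y by simp
    show "sorted (map theta X')" using Cons.prems(2) by simp
    show "sorted (map theta (Y1 @ Y2))" using Cons.prems(3) unfolding Y by (auto simp: sorted_append)
    show "\<forall>g\<in>set X'. \<forall>h\<in>set X'. theta g = theta h \<longrightarrow> commutes g h" using Cons.prems(4) by simp
  qed
  then show ?case using cY by simp
qed

lemma cl_rotate1:
  assumes "\<forall>g\<in>set xs. fst g \<noteq> 0"
  shows "cl (rotate1 xs) = id \<longleftrightarrow> cl xs = id"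
proof (cases xs)
  case Nil then show ?thesis by simp
next
  case (Cons x zs)
  have a: "fst x \<noteq> 0" using assms Cons by auto
  have surj: "\<And>y. lin_app x ((y - snd x) / fst x) = y" using a by (simp add: lin_app_def)
  have inj: "\<And>u v. lin_app x u = lin_app x v \<Longrightarrow> u = v" using a by (simp add: lin_app_def)
  have "lin_app x \<circ> cl zs = id \<longleftrightarrow> cl zs \<circ> lin_app x = id"
  proof
    assume h: "lin_app x \<circ> cl zs = id"
    show "cl zs \<circ> lin_app x = id"
    proof
      fix u
      have "lin_app x (cl zs (lin_app x u)) = lin_app x u" using h by (metis comp_apply id_apply)
      thus "(cl zs \<circ> lin_app x) u = id u" using inj by simp
    qed
  next
    assume h: "cl zs \<circ> lin_app x = id"
    show "lin_app x \<circ> cl zs = id"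
    proof
      fix y
      let ?u = "(y - snd x) / fst x"
      have "cl zs (lin_app x ?u) = ?u" using h by (metis comp_apply id_apply)
      thus "(lin_app x \<circ> cl zs) y = id y" using surj[of y] by simp
    qed
  qed
  then show ?thesis using Cons by (simp add: cl_append)
qed

lemma cl_rotate:
  assumes "\<forall>g\<in>set xs. fst g \<noteq> 0"
  shows "cl (rotate k xs) = id \<longleftrightarrow> cl xs = id"
proof (induction k)
  case 0 then show ?case by simp
next
  case (Suc k)
  have "\<forall>g\<in>set (rotate k xs). fst g \<noteq> 0" using assms by simp
  then have "cl (rotate1 (rotate k xs)) = id \<longleftrightarrow> cl (rotate k xs) = id" by (rule cl_rotate1)
  then show ?case using Suc by (simp only: rotate_Suc)
qed

lemma mset_perm:
  assumes "\<sigma> permutes {1..n}"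
  shows "mset (map (\<lambda>i. f (\<sigma> i)) [1..<Suc n]) = image_mset f (mset_set {1..n})"
proof -
  have e: "map (\<lambda>i. f (\<sigma> i)) [1..<Suc n] = map f (map \<sigma> [1..<Suc n])" by simp
  have "mset (map \<sigma> [1..<Suc n]) = image_mset \<sigma> (mset_set {1..n})"
    by (simp only: mset_map mset_upt atLeastLessThanSuc_atLeastAtMost)
  hence "mset (map (\<lambda>i. f (\<sigma> i)) [1..<Suc n]) = image_mset f (image_mset \<sigma> (mset_set {1..n}))"
    by (simp only: e mset_map)
  also have "image_mset \<sigma> (mset_set {1..n}) = mset_set {1..n}"
    using image_mset_mset_set[of \<sigma> "{1..n}"] permutes_image[OF assms] permutes_inj_on[OF assms]
    by simp
  finally show ?thesis .
qed

lemma mset_rot: "mset (rotate k xs) = mset xs"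
proof (induction k)
  case 0 then show ?case by simp
next
  case (Suc k)
  have "mset (rotate1 ys) = mset ys" for ys :: "'a list" by (cases ys) auto
  then show ?case using Suc by (simp add: rotate_Suc)
qed

theorem mainTheorem9:
  fixes f :: "nat \<Rightarrow> linfun" and n :: nat and \<sigma> \<tau> :: "nat \<Rightarrow> nat"
  assumes "\<forall>i\<in>{1..n}. monotone_lin (f i)"
    and "counterclockwise f n \<sigma>"
    and "\<forall>x. comp_perm f \<sigma> n x = x"
    and "counterclockwise f n \<tau>"
  shows "\<forall>x. comp_perm f \<tau> n x = x"
proof -
  let ?P = "\<lambda>g. \<not> identical_lin g"
  define L1 where "L1 = filter ?P (map (\<lambda>i. f (\<sigma> i)) [1..<Suc n])"
  define L2 where "L2 = filter ?P (map (\<lambda>i. f (\<tau> i)) [1..<Suc n])"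
  have ps: "\<sigma> permutes {1..n}" and pt: "\<tau> permutes {1..n}"
    using assms(2,4) by (auto simp: counterclockwise_def)
  obtain k1 where k1: "sorted (rotate k1 (angle_seq f \<sigma> n))" using assms(2) by (auto simp: counterclockwise_def)
  obtain k2 where k2: "sorted (rotate k2 (angle_seq f \<tau> n))" using assms(4) by (auto simp: counterclockwise_def)
  have as1: "angle_seq f \<sigma> n = map theta L1"
    unfolding angle_seq_def L1_def by (simp add: filter_map o_def)
  have as2: "angle_seq f \<tau> n = map theta L2"
    unfolding angle_seq_def L2_def by (simp add: filter_map o_def)
  have fpos: "\<And>p i. p permutes {1..n} \<Longrightarrow> i \<in> {1..n} \<Longrightarrow> fst (f (p i)) \<noteq> 0"
    using assms(1) by (metis less_irrefl monotone_lin_def permutes_in_image)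
  have nz1: "\<forall>g\<in>set L1. fst g \<noteq> 0" unfolding L1_def
  proof
    fix g assume "g \<in> set (filter ?P (map (\<lambda>i. f (\<sigma> i)) [1..<Suc n]))"
    then obtain i where "i \<in> {1..n}" "g = f (\<sigma> i)" by (auto, metis le_eq_less_or_eq)
    thus "fst g \<noteq> 0" using fpos[OF ps] by simp
  qed
  have nz2: "\<forall>g\<in>set L2. fst g \<noteq> 0" unfolding L2_def
  proof
    fix g assume "g \<in> set (filter ?P (map (\<lambda>i. f (\<tau> i)) [1..<Suc n]))"
    then obtain i where "i \<in> {1..n}" "g = f (\<tau> i)" by (auto, metis le_eq_less_or_eq)
    thus "fst g \<noteq> 0" using fpos[OF pt] by simp
  qed
  have c1: "cl L1 = id" using assms(3) unfolding L1_def comp_perm_cl cl_filter by (simp add: fun_eq_iff)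
  define X where "X = rotate k1 L1"
  define Y where "Y = rotate k2 L2"
  have cX: "cl X = id" using cl_rotate[OF nz1] c1 X_def by simp
  have mXY: "mset X = mset Y"
  proof -
    have "mset X = mset L1" unfolding X_def by (rule mset_rot)
    also have "\<dots> = filter_mset ?P (mset (map (\<lambda>i. f (\<sigma> i)) [1..<Suc n]))"
      unfolding L1_def by (rule mset_filter)
    also have "\<dots> = filter_mset ?P (mset (map (\<lambda>i. f (\<tau> i)) [1..<Suc n]))"
      by (simp only: mset_perm[OF ps] mset_perm[OF pt])
    also have "\<dots> = mset L2" unfolding L2_def by (rule mset_filter[symmetric])
    also have "\<dots> = mset Y" unfolding Y_def by (rule mset_rot[symmetric])
    finally show ?thesis .
  qed
  have sX: "sorted (map theta X)" using k1 as1 X_def by (simp add: rotate_map)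
  have sY: "sorted (map theta Y)" using k2 as2 Y_def by (simp add: rotate_map)
  have com: "\<forall>g\<in>set X. \<forall>h\<in>set X. theta g = theta h \<longrightarrow> commutes g h"
    unfolding X_def L1_def using same_theta_commutes by auto
  have "cl Y = id" using cl_sorted_eq[OF mXY sX sY com] cX by simp
  hence "cl L2 = id" using cl_rotate[OF nz2] Y_def by simp
  hence "cl (map (\<lambda>i. f (\<tau> i)) [1..<Suc n]) = id" unfolding L2_def cl_filter .
  thus ?thesis unfolding comp_perm_cl by simp
qed

end
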